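(* Let $H=(V,E)$ be a finite hypergraph whose edges are non-empty and pairwise disjoint and whose union is $V$ (so every vertex has degree exactly 1; edges of size 1 are allowed). If both $|V|$ and $|E|$ are even and $|V|\not\equiv |E|\pmod 4$, then $H$ is not $\mathbb{Z}_2\times\mathbb{Z}_2$-cordial.
   Context: Let $A=\mathbb{Z}_2\times\mathbb{Z}_2$. For a hypergraph $H=(V,E)$ and a labeling $c:V\to A$, write $v_c(a)=|c^{-1}(a)|$; $c$ is $A$-friendly if $|v_c(a)-v_c(b)|\le 1$ for all $a,b\in A$. It induces $c^*:E\to A$, $c^*(e)=\sum_{v\in e}c(v)$; write $e_{c^*}(a)=|(c^* )^{-1}(a)|$. $H$ is $A$-cordial if it admits an $A$-friendly labeling $c$ with $|e_{c^*}(a)-e_{c^*}(b)|\le 1$ for all $a,b\in A$. *)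

theory Defs
  imports Main "HOL-Library.Numeral_Type" "HOL-Library.Product_Plus"
begin

type_synonym klein = "2 \<times> 2"

definition vcount :: "'v set \<Rightarrow> ('v \<Rightarrow> klein) \<Rightarrow> klein \<Rightarrow> nat" where
  "vcount V c a = card {v \<in> V. c v = a}"

definition induced :: "('v \<Rightarrow> klein) \<Rightarrow> 'v set \<Rightarrow> klein" where
  "induced c e = (\<Sum>v\<in>e. c v)"

definition ecount :: "'v set set \<Rightarrow> ('v \<Rightarrow> klein) \<Rightarrow> klein \<Rightarrow> nat" where
  "ecount E c a = card {e \<in> E. induced c e = a}"

definition friendly :: "'v set \<Rightarrow> ('v \<Rightarrow> klein) \<Rightarrow> bool" where
  "friendly V c \<longleftrightarrow> (\<forall>a b. \<bar>int (vcount V c a) - int (vcount V c b)\<bar> \<le> 1)"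

definition klein_cordial :: "'v set \<Rightarrow> 'v set set \<Rightarrow> bool" where
  "klein_cordial V E \<longleftrightarrow> (\<exists>c. friendly V c \<and>
      (\<forall>a b. \<bar>int (ecount E c a) - int (ecount E c b)\<bar> \<le> 1))"

end

theory Submission
  imports Defs
begin

lemma two_exhaust: fixes x :: 2 shows "x = 0 \<or> x = 1"
proof (induct x)
  case (of_int z)
  then have "z = 0 | z = 1" by fastforce
  then show ?case by auto
qed

lemma two_double: "(x::2) + x = 0"
  using two_exhaust[of x] by auto

lemma klein_double: "(a::klein) + a = 0"
  by (cases a) (simp add: two_double zero_prod_def)

lemma sum_const_klein:
  "finite A \<Longrightarrow> (\<Sum>x\<in>A. (a::klein)) = (if even (card A) then 0 else a)"
  by (induction A rule: finite_induct) (auto simp: klein_double)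

lemma klein_UNIV: "(UNIV::klein set) = {(0,0),(0,1),(1,0),(1,1)}"
  using two_exhaust by (auto simp: prod_eq_iff)

lemma A: "((if even p then 0 else (0,0)) + (if even q then 0 else (0,1)) + (if even r then 0 else (1,0)) + (if even t then 0 else (1,1)) = (0::klein))
   \<longleftrightarrow> ((odd q \<longleftrightarrow> odd t) \<and> (odd r \<longleftrightarrow> odd t))"
  for p q r t :: nat
  by (cases "even p"; cases "even q"; cases "even r"; cases "even t") (simp_all add: zero_prod_def two_double)

lemma B: fixes p q r t :: nat
  assumes "p \<le> q+1" "q \<le> p+1" "p \<le> r+1" "r \<le> p+1" "p \<le> t+1" "t \<le> p+1"
   "q \<le> r+1" "r \<le> q+1" "q \<le> t+1" "t \<le> q+1" "r \<le> t+1" "t \<le> r+1" "even (p+q+r+t)"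
  shows "(p+q+r+t) mod 4 = 0 \<longleftrightarrow> ((odd q \<longleftrightarrow> odd t) \<and> (odd r \<longleftrightarrow> odd t))"
proof -
  define m where "m = min p (min q (min r t))"
  have hp: "p = m \<or> p = m+1" and hq: "q = m \<or> q = m+1" and hr: "r = m \<or> r = m+1"
    and ht: "t = m \<or> t = m+1"
    using assms(1-12) unfolding m_def by (auto simp: min_def)
  show ?thesis using hp hq hr ht assms(13)
    by (elim disjE) (simp_all, presburger+)
qed

lemma key:
  fixes S :: "'x set" and f :: "'x \<Rightarrow> klein"
  assumes fin: "finite S" and ev: "even (card S)"
    and bal: "\<forall>a b. \<bar>int (card {x\<in>S. f x = a}) - int (card {x\<in>S. f x = b})\<bar> \<le> 1"
  shows "(\<Sum>x\<in>S. f x) = 0 \<longleftrightarrow> card S mod 4 = 0"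
proof -
  define n where "n a = card {x\<in>S. f x = a}" for a
  have fib: "(\<Sum>x\<in>{x\<in>S. f x = a}. f x) = (if even (n a) then 0 else a)" for a
  proof -
    have "(\<Sum>x\<in>{x\<in>S. f x = a}. f x) = (\<Sum>x\<in>{x\<in>S. f x = a}. a)"
      by (rule sum.cong) auto
    also have "\<dots> = (if even (n a) then 0 else a)"
      using fin by (simp add: sum_const_klein n_def)
    finally show ?thesis .
  qed
  have s: "(\<Sum>x\<in>S. f x) = (\<Sum>a\<in>UNIV. (if even (n a) then 0 else a))"
    using sum.group[OF fin, of UNIV f f] fib by simp
  have c: "card S = (\<Sum>a\<in>UNIV. n a)"
    unfolding n_def using sum.group[OF fin, of UNIV f "\<lambda>_. 1::nat"] by simp
  have b: "\<bar>int (n a) - int (n b)\<bar> \<le> 1" for a b unfolding n_def using bal by blast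
  have su: "(\<Sum>a\<in>UNIV. (if even (n a) then 0 else a)) = (if even (n (0,0)) then 0 else (0,0)) + (if even (n (0,1)) then 0 else (0,1)) + (if even (n (1,0)) then 0 else (1,0)) + (if even (n (1,1)) then 0 else (1::2,1::2))"
    unfolding klein_UNIV by (simp add: add.assoc)
  have cu: "(\<Sum>a\<in>UNIV. n a) = n (0,0) + n (0,1) + n (1,0) + n (1,1)"
    unfolding klein_UNIV by simp
  have b2: "n a \<le> n b + 1" for a b using b[of a b] by (simp add: abs_le_iff)
  have evs: "even (n (0,0) + n (0,1) + n (1,0) + n (1,1))" using ev c cu by simp
  have e1: "(\<Sum>x\<in>S. f x) = 0 \<longleftrightarrow> ((odd (n (0,1)) \<longleftrightarrow> odd (n (1,1))) \<and> (odd (n (1,0)) \<longleftrightarrow> odd (n (1,1))))"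
    unfolding s su by (rule A)
  have e2: "card S mod 4 = 0 \<longleftrightarrow> ((odd (n (0,1)) \<longleftrightarrow> odd (n (1,1))) \<and> (odd (n (1,0)) \<longleftrightarrow> odd (n (1,1))))"
    unfolding c cu by (rule B[OF b2 b2 b2 b2 b2 b2 b2 b2 b2 b2 b2 b2 evs])
  show ?thesis unfolding e1 e2 ..
qed
theorem proposition5:
  fixes V :: "'v set" and E :: "'v set set"
  assumes "finite V"
    and "\<forall>e\<in>E. e \<noteq> {}"
    and "\<forall>e1\<in>E. \<forall>e2\<in>E. e1 \<noteq> e2 \<longrightarrow> e1 \<inter> e2 = {}"
    and "\<Union>E = V"
    and "even (card V)" and "even (card E)"
    and "card V mod 4 \<noteq> card E mod 4"
  shows "\<not> klein_cordial V E"
proof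
  assume "klein_cordial V E"
  then obtain c where fr: "friendly V c"
    and eb: "\<forall>a b. \<bar>int (ecount E c a) - int (ecount E c b)\<bar> \<le> 1"
    unfolding klein_cordial_def by blast
  have finE: "finite E" using assms(1,4) by (metis Sup_upper finite_Pow_iff finite_subset subsetI PowI)
  have fine: "\<forall>e\<in>E. finite e" using assms(1,4) by (metis Sup_upper finite_subset)
  have eq: "(\<Sum>v\<in>V. c v) = (\<Sum>e\<in>E. induced c e)"
    using sum.Union_disjoint[OF fine assms(3), of c] assms(4) by (simp add: induced_def o_def)
  have kV: "(\<Sum>v\<in>V. c v) = 0 \<longleftrightarrow> card V mod 4 = 0"
    by (rule key[OF assms(1,5)]) (use fr in \<open>simp add: friendly_def vcount_def\<close>)
  have kE: "(\<Sum>e\<in>E. induced c e) = 0 \<longleftrightarrow> card E mod 4 = 0"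
    by (rule key[OF finE assms(6)]) (use eb in \<open>simp add: ecount_def\<close>)
  have "card V mod 4 = 0 \<longleftrightarrow> card E mod 4 = 0" using kV kE eq by simp
  then show False using assms(5,6,7) by presburger
qed

end
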